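(* Let $A,B\in\mathcal{B}(\mathcal{H})$. Then \begin{equation*} w\left(\begin{bmatrix} 0 &A \\ B& 0 \end{bmatrix}\right)+\frac{|w(A+B)-w(A-B)|}{2}\leq w(A)+w(B). \end{equation*}
   Context: $\mathcal{H}$ is a complex Hilbert space and $\mathcal{B}(\mathcal{H})$ is the $C^*$-algebra of all bounded linear operators on $\mathcal{H}$. For $T\in\mathcal{B}(\mathcal{H})$, $w(T)=\sup\{|\langle Tx,x\rangle|:\|x\|=1\}$ is the numerical radius. A $2\times 2$ operator matrix with entries in $\mathcal{B}(\mathcal{H})$ is regarded as an operator on $\mathcal{H}\oplus\mathcal{H}$. *)

theory Defs
  imports "HOL-Analysis.Analysis"
begin

text \<open>The inner product is linear in the first and conjugate-linear in the second argument;
  the norm is the one induced by the inner product.\<close>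

class complex_inner = real_normed_vector +
  fixes scaleC :: "complex \<Rightarrow> 'a \<Rightarrow> 'a"
    and cinner :: "'a \<Rightarrow> 'a \<Rightarrow> complex"
  assumes scaleC_add_right: "scaleC a (x + y) = scaleC a x + scaleC a y"
    and scaleC_add_left: "scaleC (a + b) x = scaleC a x + scaleC b x"
    and scaleC_scaleC: "scaleC a (scaleC b x) = scaleC (a * b) x"
    and scaleC_one: "scaleC 1 x = x"
    and scaleR_scaleC: "scaleR r x = scaleC (complex_of_real r) x"
    and cinner_add_left: "cinner (x + y) z = cinner x z + cinner y z"
    and cinner_scaleC_left: "cinner (scaleC a x) y = a * cinner x y"
    and cinner_commute: "cinner x y = cnj (cinner y x)"
    and cinner_self_norm: "cinner x x = complex_of_real ((norm x)\<^sup>2)"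

class complex_hilbert = complex_inner + complete_space

instantiation prod :: (complex_inner, complex_inner) complex_inner
begin

definition scaleC_prod_def:
  "scaleC c x = (scaleC c (fst x), scaleC c (snd x))"

definition cinner_prod_def:
  "cinner x y = cinner (fst x) (fst y) + cinner (snd x) (snd y)"

instance
proof
  fix a b :: complex and x y z :: "'a \<times> 'b" and r :: real
  show "scaleC a (x + y) = scaleC a x + scaleC a y"
    by (simp add: scaleC_prod_def scaleC_add_right)
  show "scaleC (a + b) x = scaleC a x + scaleC b x"
    by (simp add: scaleC_prod_def scaleC_add_left)
  show "scaleC a (scaleC b x) = scaleC (a * b) x"
    by (simp add: scaleC_prod_def scaleC_scaleC)
  show "scaleC 1 x = x"
    by (simp add: scaleC_prod_def scaleC_one)
  show "scaleR r x = scaleC (complex_of_real r) x"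
    by (simp add: scaleC_prod_def scaleR_scaleC scaleR_prod_def)
  show "cinner (x + y) z = cinner x z + cinner y z"
    by (simp add: cinner_prod_def cinner_add_left)
  show "cinner (scaleC a x) y = a * cinner x y"
    by (simp add: cinner_prod_def scaleC_prod_def cinner_scaleC_left algebra_simps)
  show "cinner x y = cnj (cinner y x)"
    by (simp add: cinner_prod_def cinner_commute[of "fst x"] cinner_commute[of "snd x"])
  show "cinner x x = complex_of_real ((norm x)\<^sup>2)"
    by (simp add: cinner_prod_def cinner_self_norm norm_prod_def)
qed

end

instance prod :: (complex_hilbert, complex_hilbert) complex_hilbert ..

definition bounded_op :: "('a::complex_inner \<Rightarrow> 'a) \<Rightarrow> bool" where
  "bounded_op T \<longleftrightarrow>
     (\<forall>x y. T (x + y) = T x + T y) \<and>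
     (\<forall>c x. T (scaleC c x) = scaleC c (T x)) \<and>
     (\<exists>K. \<forall>x. norm (T x) \<le> norm x * K)"

text \<open>The value 0 is inserted
  so that the supremum is also meaningful (and equal to 0) for the zero space; since all
  values are nonnegative this does not change the supremum otherwise.\<close>
definition numrad :: "('a::complex_inner \<Rightarrow> 'a) \<Rightarrow> real" where
  "numrad T = Sup (insert 0 {cmod (cinner (T x) x) | x. norm x = 1})"

definition opmat2 :: "('a \<Rightarrow> 'a) \<Rightarrow> ('a \<Rightarrow> 'a) \<Rightarrow> ('a \<Rightarrow> 'a) \<Rightarrow> ('a \<Rightarrow> 'a)
    \<Rightarrow> ('a::complex_inner \<times> 'a \<Rightarrow> 'a \<times> 'a)" where
  "opmat2 T11 T12 T21 T22 = (\<lambda>(x, y). (T11 x + T12 y, T21 x + T22 y))"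

end

theory Submission
  imports Defs
begin

lemma cinner_zero_left[simp]: "cinner (0::'a::complex_inner) y = 0"
  using cinner_add_left[of "0::'a" 0 y] by simp
lemma cinner_zero_right[simp]: "cinner (x::'a::complex_inner) 0 = 0"
  using cinner_commute[of x 0] by simp
lemma cinner_add_right: "cinner (x::'a::complex_inner) (y + z) = cinner x y + cinner x z"
  by (metis cinner_add_left cinner_commute complex_cnj_add)
lemma cinner_scaleC_right: "cinner (x::'a::complex_inner) (scaleC a y) = cnj a * cinner x y"
  by (metis cinner_scaleC_left cinner_commute complex_cnj_mult complex_cnj_cnj)
lemma scaleC_m1: "scaleC (-1) (y::'a::complex_inner) = - y"
  using scaleR_scaleC[of "-1" y] by simp
lemma cinner_minus_left: "cinner (- x::'a::complex_inner) y = - cinner x y"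
  using cinner_scaleC_left[of "-1" x y] by (simp add: scaleC_m1)
lemma cinner_minus_right: "cinner (x::'a::complex_inner) (- y) = - cinner x y"
  using cinner_scaleC_right[of x "-1" y] by (simp add: scaleC_m1)
lemma cinner_diff_left: "cinner (x - z::'a::complex_inner) y = cinner x y - cinner z y"
  using cinner_add_left[of x "-z" y] by (simp add: cinner_minus_left)
lemma cinner_diff_right: "cinner (x::'a::complex_inner) (y - z) = cinner x y - cinner x z"
  using cinner_add_right[of x y "-z"] by (simp add: cinner_minus_right)
lemma norm_scaleC: "norm (scaleC c (x::'a::complex_inner)) = cmod c * norm x"
proof -
  have "complex_of_real ((norm (scaleC c x))\<^sup>2) = c * cnj c * complex_of_real ((norm x)\<^sup>2)"
    by (metis cinner_self_norm cinner_scaleC_left cinner_scaleC_right mult.assoc mult.commute)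
  also have "c * cnj c = complex_of_real ((cmod c)^2)" by (rule complex_norm_square[symmetric])
  finally have "(norm (scaleC c x))\<^sup>2 = ((cmod c) * norm x)^2"
    by (metis of_real_eq_iff of_real_mult power_mult_distrib)
  thus ?thesis by (simp add: power2_eq_iff_nonneg)
qed

lemma cauchy_schwarz: "cmod (cinner (a::'a::complex_inner) b) \<le> norm a * norm b"
proof (cases "b = 0")
  case True then show ?thesis by simp
next
  case False
  define n where "n = (norm b)^2"
  have n: "n > 0" using False by (simp add: n_def)
  define c where "c = cinner a b"
  define t where "t = c / complex_of_real n"
  have "0 \<le> (norm (a - scaleC t b))^2" by simp
  have e: "complex_of_real ((norm (a - scaleC t b))^2) = complex_of_real ((norm a)^2) - cnj t * c - t * cnj c + t * cnj t * complex_of_real n"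
  proof -
    have "cinner (a - scaleC t b) (a - scaleC t b) = cinner a a - cnj t * c - t * cinner b a + t * cnj t * cinner b b"
      unfolding c_def
      by (simp add: cinner_diff_left cinner_diff_right cinner_scaleC_left cinner_scaleC_right algebra_simps)
    moreover have "cinner b a = cnj c" unfolding c_def by (simp add: cinner_commute[of b a])
    ultimately show ?thesis by (simp add: cinner_self_norm n_def)
  qed
  also have "\<dots> = complex_of_real ((norm a)^2 - (cmod c)^2 / n)"
  proof -
    have cc: "c * cnj c = complex_of_real ((cmod c)^2)" by (rule complex_norm_square[symmetric])
    have 1: "cnj t * c = complex_of_real ((cmod c)^2 / n)" unfolding t_def using cc
      by (simp add: mult.commute)
    have 2: "t * cnj c = complex_of_real ((cmod c)^2 / n)" unfolding t_def using cc
      by simp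
    have 3: "t * cnj t * complex_of_real n = complex_of_real ((cmod c)^2 / n)" unfolding t_def using cc n
      by (simp add: field_simps power2_eq_square)
    show ?thesis unfolding 1 2 3 by simp
  qed
  finally have "(norm a)^2 - (cmod c)^2 / n \<ge> 0"
    by (metis of_real_eq_iff zero_le_power2)
  hence "(cmod c)^2 \<le> ((norm a) * norm b)^2" using n by (simp add: n_def field_simps power_mult_distrib)
  thus ?thesis unfolding c_def by (simp add: abs_le_square_iff power2_le_iff_abs_le)
qed
lemma scaleC_minus_right: "scaleC c (- y::'a::complex_inner) = - scaleC c y"
  by (metis scaleC_m1 scaleC_scaleC mult.commute)
lemma scaleC_diff_right: "scaleC c (x - y::'a::complex_inner) = scaleC c x - scaleC c y"
  by (metis diff_conv_add_uminus scaleC_add_right scaleC_minus_right)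

lemma bop_add: "bounded_op T \<Longrightarrow> T (x + y) = T x + T y"
  unfolding bounded_op_def by blast
lemma bop_scaleC: "bounded_op T \<Longrightarrow> T (scaleC c x) = scaleC c (T x)"
  unfolding bounded_op_def by blast
lemma bop_zero: "bounded_op T \<Longrightarrow> T 0 = 0"
  using bop_add[of T 0 0] by simp

lemma bop_sum: assumes "bounded_op A" "bounded_op B" shows "bounded_op (\<lambda>x. A x + B x)"
proof -
  obtain K1 where K1: "\<And>x. norm (A x) \<le> norm x * K1" using assms(1) unfolding bounded_op_def by blast
  obtain K2 where K2: "\<And>x. norm (B x) \<le> norm x * K2" using assms(2) unfolding bounded_op_def by blast
  have "norm (A x + B x) \<le> norm x * (K1 + K2)" for x
    using norm_triangle_ineq[of "A x" "B x"] K1[of x] K2[of x] by (simp add: algebra_simps)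
  thus ?thesis using assms unfolding bounded_op_def
    by (intro conjI allI exI[of _ "K1+K2"]) (auto simp: scaleC_add_right algebra_simps)
qed

lemma bop_diff: assumes "bounded_op A" "bounded_op B" shows "bounded_op (\<lambda>x. A x - B x)"
proof -
  obtain K1 where K1: "\<And>x. norm (A x) \<le> norm x * K1" using assms(1) unfolding bounded_op_def by blast
  obtain K2 where K2: "\<And>x. norm (B x) \<le> norm x * K2" using assms(2) unfolding bounded_op_def by blast
  have "norm (A x - B x) \<le> norm x * (K1 + K2)" for x
    using norm_triangle_ineq4[of "A x" "B x"] K1[of x] K2[of x] by (simp add: algebra_simps)
  thus ?thesis using assms unfolding bounded_op_def
    by (intro conjI allI exI[of _ "K1+K2"]) (auto simp: scaleC_diff_right algebra_simps)
qed

lemma numrad_bdd: assumes "bounded_op (X::'a::complex_inner \<Rightarrow> 'a)"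
  shows "bdd_above (insert 0 {cmod (cinner (X x) x) | x. norm x = 1})"
proof -
  obtain K where K: "\<And>x. norm (X x) \<le> norm x * K" using assms unfolding bounded_op_def by blast
  have "cmod (cinner (X x) x) \<le> K" if "norm x = 1" for x
    using cauchy_schwarz[of "X x" x] K[of x] that by simp
  thus ?thesis unfolding bdd_above_def
    by (rule_tac x="max 0 K" in exI) (auto intro: order_trans[OF _ max.cobounded2])
qed

lemma numrad_unit: assumes "bounded_op X" "norm x = 1"
  shows "cmod (cinner (X x) x) \<le> numrad X"
  unfolding numrad_def using numrad_bdd[OF assms(1)] assms(2)
  by (intro cSup_upper) auto

lemma numrad_nonneg: assumes "bounded_op X" shows "0 \<le> numrad X"
  unfolding numrad_def using numrad_bdd[OF assms(1)]
  by (intro cSup_upper) auto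

lemma numrad_least: assumes "\<And>x. norm x = 1 \<Longrightarrow> cmod (cinner (X x) x) \<le> M" "0 \<le> M"
  shows "numrad X \<le> M"
  unfolding numrad_def using assms by (intro cSup_least) auto

lemma numrad_le: assumes "bounded_op X"
  shows "cmod (cinner (X u) u) \<le> numrad X * (norm u)^2"
proof (cases "u = 0")
  case True then show ?thesis using bop_zero[OF assms] by simp
next
  case False
  define e where "e = scaleC (complex_of_real (1 / norm u)) u"
  have ne: "norm e = 1" using False by (simp add: e_def norm_scaleC norm_divide)
  have ue: "u = scaleC (complex_of_real (norm u)) e" using False
    by (simp add: e_def scaleC_scaleC scaleC_one)
  have "cinner (X u) u = complex_of_real ((norm u)^2) * cinner (X e) e"
    by (subst (1 2) ue) (simp add: bop_scaleC[OF assms] cinner_scaleC_left cinner_scaleC_right power2_eq_square)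
  hence "cmod (cinner (X u) u) = (norm u)^2 * cmod (cinner (X e) e)"
    by (simp only: norm_mult norm_of_real) simp
  also have "\<dots> \<le> (norm u)^2 * numrad X"
    using numrad_unit[OF assms ne] by (simp add: mult_left_mono)
  finally show ?thesis by (simp add: mult.commute)
qed

lemma expand: assumes "bounded_op X"
  shows "cinner (X (x + scaleC c y)) (x + scaleC c y) =
    cinner (X x) x + cnj c * cinner (X x) y + c * cinner (X y) x + c * cnj c * cinner (X y) y"
  by (simp add: bop_add[OF assms] bop_scaleC[OF assms] cinner_add_left cinner_add_right
     cinner_scaleC_left cinner_scaleC_right algebra_simps)

lemma expand_norm:
  "complex_of_real ((norm (x + scaleC c y))^2) =
    complex_of_real ((norm x)^2) + cnj c * cinner x y + c * cinner y x + c * cnj c * complex_of_real ((norm y)^2)"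
  unfolding cinner_self_norm[symmetric]
  by (simp add: cinner_add_left cinner_add_right
     cinner_scaleC_left cinner_scaleC_right algebra_simps)

lemma parallelo: assumes "c * cnj c = 1"
  shows "(norm (x + scaleC c y))^2 + (norm (x + scaleC (-c) y))^2 = 2 * ((norm x)^2 + (norm y)^2)"
proof -
  have "complex_of_real ((norm (x + scaleC c y))^2 + (norm (x + scaleC (-c) y))^2)
     = complex_of_real (2 * ((norm x)^2 + (norm y)^2))"
    using assms unfolding of_real_add expand_norm by (simp add: algebra_simps)
  thus ?thesis by (simp only: of_real_eq_iff)
qed

lemma gen_bound: assumes "bounded_op X" "c * cnj c = 1"
  shows "cmod (2 * (cnj c * cinner (X x) y + c * cinner (X y) x)) \<le> 2 * numrad X * ((norm x)^2 + (norm y)^2)"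
proof -
  have "2 * (cnj c * cinner (X x) y + c * cinner (X y) x) =
     cinner (X (x + scaleC c y)) (x + scaleC c y) - cinner (X (x + scaleC (-c) y)) (x + scaleC (-c) y)"
    unfolding expand[OF assms(1)] by (simp add: algebra_simps)
  also have "cmod \<dots> \<le> cmod (cinner (X (x + scaleC c y)) (x + scaleC c y)) + cmod (cinner (X (x + scaleC (-c) y)) (x + scaleC (-c) y))"
    by (rule norm_triangle_ineq4)
  also have "\<dots> \<le> numrad X * (norm (x + scaleC c y))^2 + numrad X * (norm (x + scaleC (-c) y))^2"
    by (intro add_mono numrad_le[OF assms(1)])
  also have "\<dots> = numrad X * ((norm (x + scaleC c y))^2 + (norm (x + scaleC (-c) y))^2)"
    by (rule distrib_left[symmetric])
  also have "\<dots> = 2 * numrad X * ((norm x)^2 + (norm y)^2)"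
    using parallelo[OF assms(2), of x y] by simp
  finally show ?thesis .
qed

lemma sym_bound: assumes "bounded_op X"
  shows "cmod (cinner (X x) y + cinner (X y) x) \<le> numrad X * ((norm x)^2 + (norm y)^2)"
proof -
  have "2 * (cnj 1 * cinner (X x) y + 1 * cinner (X y) x) = 2 * (cinner (X x) y + cinner (X y) x)"
    by simp
  thus ?thesis using gen_bound[OF assms, of 1 x y] by (simp only: norm_mult) simp
qed

lemma asym_bound: assumes "bounded_op X"
  shows "cmod (cinner (X y) x - cinner (X x) y) \<le> numrad X * ((norm x)^2 + (norm y)^2)"
proof -
  have "2 * (cnj \<i> * cinner (X x) y + \<i> * cinner (X y) x) = 2 * \<i> * (cinner (X y) x - cinner (X x) y)"
    by (simp add: algebra_simps)
  thus ?thesis using gen_bound[OF assms, of "\<i>" x y] by (simp add: norm_mult)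
qed

theorem theorem4p14:
  fixes A B :: "'a::complex_hilbert \<Rightarrow> 'a"
  assumes "bounded_op A" and "bounded_op B"
  shows "numrad (opmat2 (\<lambda>_. 0) A B (\<lambda>_. 0))
           + \<bar>numrad (\<lambda>x. A x + B x) - numrad (\<lambda>x. A x - B x)\<bar> / 2
         \<le> numrad A + numrad B"
proof -
  define S where "S = (\<lambda>x. A x + B x)"
  define D where "D = (\<lambda>x. A x - B x)"
  have bS: "bounded_op S" unfolding S_def using bop_sum[OF assms] .
  have bD: "bounded_op D" unfolding D_def using bop_diff[OF assms] .
  have wA: "0 \<le> numrad A" and wB: "0 \<le> numrad B"
    using numrad_nonneg assms by auto
  have wS0: "0 \<le> numrad S" and wD0: "0 \<le> numrad D"
    using numrad_nonneg bS bD by auto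
  have wS: "numrad S \<le> numrad A + numrad B"
  proof (rule numrad_least)
    fix x :: 'a assume x: "norm x = 1"
    have "cmod (cinner (S x) x) \<le> cmod (cinner (A x) x) + cmod (cinner (B x) x)"
      unfolding S_def cinner_add_left by (rule norm_triangle_ineq)
    also have "\<dots> \<le> numrad A + numrad B"
      using numrad_unit[OF assms(1) x] numrad_unit[OF assms(2) x] by simp
    finally show "cmod (cinner (S x) x) \<le> numrad A + numrad B" .
  qed (use wA wB in simp)
  have wD: "numrad D \<le> numrad A + numrad B"
  proof (rule numrad_least)
    fix x :: 'a assume x: "norm x = 1"
    have "cmod (cinner (D x) x) \<le> cmod (cinner (A x) x) + cmod (cinner (B x) x)"
      unfolding D_def cinner_diff_left by (rule norm_triangle_ineq4)
    also have "\<dots> \<le> numrad A + numrad B"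
      using numrad_unit[OF assms(1) x] numrad_unit[OF assms(2) x] by simp
    finally show "cmod (cinner (D x) x) \<le> numrad A + numrad B" .
  qed (use wA wB in simp)
  have wT: "numrad (opmat2 (\<lambda>_. 0) A B (\<lambda>_. 0)) \<le> (numrad S + numrad D) / 2"
  proof (rule numrad_least)
    fix z :: "'a \<times> 'a" assume z: "norm z = 1"
    obtain x y where xy: "z = (x, y)" by (cases z)
    have n1: "(norm x)^2 + (norm y)^2 = 1" using z unfolding xy norm_prod_def
      by simp
    have "cinner (opmat2 (\<lambda>_. 0) A B (\<lambda>_. 0) z) z = cinner (A y) x + cinner (B x) y"
      unfolding xy opmat2_def by (simp add: cinner_prod_def)
    also have "\<dots> = ((cinner (S x) y + cinner (S y) x) + (cinner (D y) x - cinner (D x) y)) / 2"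
      unfolding S_def D_def by (simp add: cinner_add_left cinner_diff_left field_simps)
    finally have "cmod (cinner (opmat2 (\<lambda>_. 0) A B (\<lambda>_. 0) z) z)
       = cmod ((cinner (S x) y + cinner (S y) x) + (cinner (D y) x - cinner (D x) y)) / 2"
      by (simp only: norm_divide) simp
    also have "\<dots> \<le> (cmod (cinner (S x) y + cinner (S y) x) + cmod (cinner (D y) x - cinner (D x) y)) / 2"
      by (intro divide_right_mono norm_triangle_ineq) simp
    also have "\<dots> \<le> (numrad S + numrad D) / 2"
      using sym_bound[OF bS, where x=x and y=y] asym_bound[OF bD, where x=x and y=y] unfolding n1 mult_1_right by (intro divide_right_mono add_mono) simp_all
    finally show "cmod (cinner (opmat2 (\<lambda>_. 0) A B (\<lambda>_. 0) z) z) \<le> (numrad S + numrad D) / 2" .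
  qed (use wS0 wD0 in simp)
  show ?thesis using wT wS wD unfolding S_def[symmetric] D_def[symmetric] by (auto simp: abs_if field_simps)
qed

end
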